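(* For each integer $n\ge 1$, the function $x\mapsto k_n(x)$ is strictly increasing on each of the intervals $[0,1)$ and $(1,+\infty)$: on $[0,1)$ it increases from $k_n(0)=0$ to $+\infty$ (as $x\to 1^-$), and on $(1,+\infty)$ it increases from $-\infty$ (as $x\to1^+$) to $-1$ (as $x\to+\infty$).
   Context: For an integer $n\ge1$, $x\ge 0$, $x\neq 1$, define $H_n(x,0)=\sum_{l=1}^{n}\frac{1-x\cos(2\pi l/n)}{\left(1+x^2-2x\cos(2\pi l/n)\right)^{3/2}}$, and $k_n(x)=\frac1n H_n(x,0)-1$. *)

theory Defs
  imports "HOL-Analysis.Analysis"
begin

definition H0 :: "nat \<Rightarrow> real \<Rightarrow> real" where
  "H0 n x = (\<Sum>l=1..n. (1 - x * cos (2 * pi * real l / real n)) /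
       (1 + x^2 - 2 * x * cos (2 * pi * real l / real n)) powr (3/2))"

definition k :: "nat \<Rightarrow> real \<Rightarrow> real" where
  "k n x = H0 n x / real n - 1"

end

theory Submission
  imports Defs "HOL-Real_Asymp.Real_Asymp"
begin


definition ca :: "nat \<Rightarrow> real" where "ca j = pochhammer (1/2) j / fact j"
definition cb :: "nat \<Rightarrow> real" where "cb j = (\<Sum>i\<le>j. ca i)"

lemma ca_nonneg: "0 \<le> ca j" by (simp add: ca_def pochhammer_pos less_imp_le)
lemma cb_nonneg: "0 \<le> cb j" by (simp add: cb_def sum_nonneg ca_nonneg)
lemma ca0: "ca 0 = 1" by (simp add: ca_def)
lemma ca1: "ca 1 = 1/2" by (simp add: ca_def)
lemma ca1': "ca (Suc 0) = 1/2" using ca1 by simp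
lemma cb0: "cb 0 = 1" by (simp add: cb_def ca0)
lemma cb1: "cb 1 = 3/2"
proof -
  have "cb 1 = ca 0 + ca 1" by (simp add: cb_def)
  then show ?thesis by (simp add: ca0 ca1')
qed

lemma A_sums:
  fixes z :: complex assumes "norm z < 1"
  shows "(\<lambda>j. of_real (ca j) * z^j) sums ((1 - z) powr (-1/2))"
proof -
  have "(\<lambda>j. ((-1/2) gchoose j) * (-z)^j) sums ((1 + (-z)) powr (-1/2))"
    by (rule gen_binomial_complex) (use assms in simp)
  moreover have "((-1/2::complex) gchoose j) * (-z)^j = of_real (ca j) * z^j" for j
  proof -
    have "(1/2::complex) = of_real (1/2)" by simp
    then have p: "pochhammer (1/2::complex) j = of_real (pochhammer (1/2) j)"
      by (metis pochhammer_of_real)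
    define Q where "Q = of_real (pochhammer (1/2) j) / (fact j :: complex)"
    have g: "((-1/2::complex) gchoose j) = (-1)^j * Q"
      by (simp add: gbinomial_pochhammer p Q_def)
    have m: "(-z)^j = (-1)^j * z^j" by (rule power_minus)
    have e: "(-1::complex)^j * (-1)^j = 1"
      by (simp add: power_mult_distrib[symmetric])
    have c: "complex_of_real (ca j) = Q"
      by (simp add: ca_def Q_def)
    have "((-1/2::complex) gchoose j) * (-z)^j = ((-1)^j * Q) * ((-1)^j * z^j)"
      by (simp only: g m)
    also have "\<dots> = ((-1)^j * (-1)^j) * (Q * z^j)" by (simp only: mult_ac)
    also have "\<dots> = Q * z^j" by (simp only: e mult_1_left)
    finally show ?thesis by (simp only: c)
  qed
  ultimately show ?thesis by simp
qed

lemma summable_ca: "0 \<le> t \<Longrightarrow> t < 1 \<Longrightarrow> summable (\<lambda>j. ca j * t^j)"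
proof -
  assume "0 \<le> t" "t < 1"
  then have "(\<lambda>j. of_real (ca j) * (of_real t)^j) sums ((1 - of_real t) powr (-1/2::complex))"
    by (intro A_sums) simp
  then have "summable (\<lambda>j. complex_of_real (ca j * t^j))" by (simp add: sums_summable)
  then show ?thesis using summable_complex_of_real by blast
qed

lemma C_sums:
  fixes z :: complex assumes "norm z < 1"
  shows "(\<lambda>j. of_real (cb j) * z^j) sums ((1 - z) powr (-1/2) / (1 - z))"
proof -
  have s1: "summable (\<lambda>j. norm (of_real (ca j) * z^j))"
    using summable_ca[of "norm z"] assms by (simp add: norm_mult norm_power abs_of_nonneg ca_nonneg)
  have s2: "summable (\<lambda>j. norm (z^j))" using assms by (simp add: norm_power)
  have "(\<lambda>j. \<Sum>i\<le>j. (of_real (ca i) * z^i) * z^(j-i)) sums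
        ((\<Sum>j. of_real (ca j) * z^j) * (\<Sum>j. z^j))"
    by (rule Cauchy_product_sums[OF s1 s2])
  moreover have "(\<Sum>i\<le>j. (of_real (ca i) * z^i) * z^(j-i)) = of_real (cb j) * z^j" for j
  proof -
    have "(\<Sum>i\<le>j. (of_real (ca i) * z^i) * z^(j-i)) = (\<Sum>i\<le>j. of_real (ca i) * z^j)"
      by (intro sum.cong refl) (simp add: mult.assoc power_add[symmetric])
    then show ?thesis by (simp add: cb_def sum_distrib_right)
  qed
  moreover have "(\<Sum>j. of_real (ca j) * z^j) = (1 - z) powr (-1/2)"
    using A_sums[OF assms] by (simp add: sums_iff)
  moreover have "(\<Sum>j. z^j) = 1 / (1 - z)" using geometric_sums[OF assms] by (simp add: sums_iff)
  ultimately show ?thesis by simp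
qed

lemma summable_cb: "0 \<le> t \<Longrightarrow> t < 1 \<Longrightarrow> summable (\<lambda>j. cb j * t^j)"
proof -
  assume "0 \<le> t" "t < 1"
  then have "(\<lambda>j. of_real (cb j) * (of_real t)^j) sums ((1 - of_real t) powr (-1/2::complex) / (1 - of_real t))"
    by (intro C_sums) simp
  then have "summable (\<lambda>j. complex_of_real (cb j * t^j))" by (simp add: sums_summable)
  then show ?thesis using summable_complex_of_real by blast
qed


lemma key_identity:
  fixes z :: complex assumes z: "norm z < 1"
  shows "(1 - cnj z) powr (-1/2) * ((1 - z) powr (-1/2) / (1 - z))
         = (1 - cnj z) / of_real (norm (1 - z) ^ 3)"
proof -
  define P where "P = (1 - z) powr (-1/2)"
  define r where "r = norm (1 - z)"
  have z1: "1 - z \<noteq> 0" using z by auto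
  have rpos: "r > 0" using z1 by (simp add: r_def)
  have "(\<lambda>j. cnj (of_real (ca j) * z^j)) sums cnj P"
    using A_sums[OF z] by (simp only: sums_cnj P_def)
  moreover have "(\<lambda>j. cnj (of_real (ca j) * z^j)) = (\<lambda>j. of_real (ca j) * (cnj z)^j)"
    by simp
  ultimately have "(\<lambda>j. of_real (ca j) * (cnj z)^j) sums cnj P" by simp
  moreover have "(\<lambda>j. of_real (ca j) * (cnj z)^j) sums ((1 - cnj z) powr (-1/2))"
    by (rule A_sums) (use z in simp)
  ultimately have cP: "(1 - cnj z) powr (-1/2) = cnj P" using sums_unique2 by blast
  have nP: "norm P = r powr (-1/2)"
    unfolding P_def r_def by (subst norm_powr_real_powr') auto
  have "cnj P * P = of_real ((norm P)^2)" using complex_norm_square[of P] by (simp only: mult.commute)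
  also have "(norm P)^2 = r powr (-1)"
  proof -
    have "(r powr (-1/2))^2 = (r powr (-1/2)) * (r powr (-1/2))" by (simp add: power2_eq_square)
    also have "\<dots> = r powr (-1/2 + -1/2)" by (rule powr_add[symmetric])
    also have "\<dots> = r powr (-1)" by simp
    finally show ?thesis by (simp add: nP)
  qed
  also have "r powr (-1) = 1 / r" using rpos by (simp add: powr_minus divide_inverse)
  finally have cPP: "cnj P * P = of_real (1 / r)" .
  have inv: "1 / (1 - z) = cnj (1 - z) / of_real (r^2)"
  proof -
    have "(1 - z) * cnj (1 - z) = of_real (r^2)" unfolding r_def by (rule complex_norm_square[symmetric])
    then have h: "(1 - z) * cnj (1 - z) = of_real (r^2)" .
    have "cnj (1-z) \<noteq> 0" using z1 by (metis complex_cnj_zero_iff)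
    have "cnj (1 - z) / of_real (r^2) = cnj (1 - z) / ((1 - z) * cnj (1 - z))" by (simp only: h)
    also have "\<dots> = 1 / (1 - z)" using \<open>cnj (1-z) \<noteq> 0\<close> by (rule nonzero_divide_mult_cancel_right)
    finally show ?thesis ..
  qed
  have "(1 - cnj z) powr (-1/2) * ((1 - z) powr (-1/2) / (1 - z))
        = (cnj P * P) * (1 / (1 - z))" unfolding cP P_def[symmetric] by simp
  also have "\<dots> = of_real (1/r) * (cnj (1 - z) / of_real (r^2))" by (simp only: cPP inv)
  also have "\<dots> = cnj (1 - z) / (of_real r * of_real (r^2))"
    by (simp add: divide_inverse inverse_mult_distrib mult_ac)
  also have "of_real r * of_real (r^2) = (of_real (r^3) :: complex)"
    by (simp add: power_numeral_reduce)
  finally show ?thesis by (simp add: r_def)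
qed

lemma rho_eq:
  fixes y t :: real
  shows "norm (1 - of_real y * cis t) ^ 2 = 1 + y^2 - 2*y*cos t"
proof -
  have "norm (1 - of_real y * cis t) ^ 2 = (1 - y * cos t)^2 + (y * sin t)^2"
    by (simp add: cmod_power2)
  also have "\<dots> = 1 + y^2 - 2*y*cos t"
    by (simp add: power2_diff power_mult_distrib cos_squared_eq algebra_simps)
  finally show ?thesis .
qed

lemma rho_powr:
  fixes y t :: real assumes "0 \<le> y" "y < 1"
  shows "norm (1 - of_real y * cis t) ^ 3 = (1 + y^2 - 2*y*cos t) powr (3/2)"
proof -
  define r where "r = norm (1 - of_real y * cis t)"
  have "norm (of_real y * cis t) < 1" using assms by (simp add: norm_mult)
  then have "of_real y * cis t \<noteq> 1" by auto
  then have "r > 0" unfolding r_def by simp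
  have "(1 + y^2 - 2*y*cos t) powr (3/2) = (r^2) powr (3/2)" by (simp add: rho_eq r_def)
  also have "r^2 = r powr (real 2)" using \<open>r > 0\<close> by (rule powr_realpow[symmetric])
  also have "(r powr (real 2)) powr (3/2) = r powr (real 3)" by (simp add: powr_powr)
  also have "r powr (real 3) = r ^ 3" using \<open>r > 0\<close> by (rule powr_realpow)
  finally show ?thesis by (simp add: r_def)
qed



lemma term_eq:
  fixes y \<theta> :: real and s :: int
  assumes "i \<le> m"
  shows "Re (cis (real_of_int s * \<theta>) * ((of_real (ca i) * cnj (of_real y * cis \<theta>) ^ i) *
            (of_real (cb (m - i)) * (of_real y * cis \<theta>) ^ (m - i))))
         = y^m * (ca i * cb (m-i) * cos (real_of_int (int m - 2 * int i + s) * \<theta>))"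
proof -
  have c1: "cnj (of_real y * cis \<theta>) ^ i = of_real (y^i) * cis (real i * (-\<theta>))"
  proof -
    have "cnj (of_real y * cis \<theta>) = of_real y * cis (-\<theta>)" by (simp add: cis_cnj)
    then show ?thesis by (simp only: power_mult_distrib Complex.DeMoivre of_real_power)
  qed
  have c2: "(of_real y * cis \<theta>) ^ (m - i) = of_real (y^(m-i)) * cis (real (m-i) * \<theta>)"
    by (simp only: power_mult_distrib Complex.DeMoivre of_real_power)
  have yy: "y^i * y^(m-i) = y^m" using assms by (simp add: power_add[symmetric])
  have arg: "real_of_int s * \<theta> + (real i * (-\<theta>) + real (m-i) * \<theta>)
        = real_of_int (int m - 2 * int i + s) * \<theta>"
    using assms by (simp add: of_nat_diff algebra_simps)
  have "cis (real_of_int s * \<theta>) * ((of_real (ca i) * cnj (of_real y * cis \<theta>) ^ i) *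
            (of_real (cb (m - i)) * (of_real y * cis \<theta>) ^ (m - i)))
      = of_real (ca i * cb (m-i) * (y^i * y^(m-i))) *
          (cis (real_of_int s * \<theta>) * (cis (real i * (-\<theta>)) * cis (real (m-i) * \<theta>)))"
    unfolding c1 c2 by (simp only: of_real_mult mult_ac)
  also have "\<dots> = of_real (ca i * cb (m-i) * y^m) * cis (real_of_int (int m - 2 * int i + s) * \<theta>)"
    by (simp only: cis_mult arg yy)
  finally have E: "cis (real_of_int s * \<theta>) * ((of_real (ca i) * cnj (of_real y * cis \<theta>) ^ i) *
            (of_real (cb (m - i)) * (of_real y * cis \<theta>) ^ (m - i))) = of_real (ca i * cb (m-i) * y^m) * cis (real_of_int (int m - 2 * int i + s) * \<theta>)" .
  show ?thesis unfolding E by (simp add: mult_ac)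
qed

lemma expand:
  fixes y \<theta> :: real and s :: int
  assumes y: "0 \<le> y" "y < 1"
  shows "(\<lambda>m. y^m * (\<Sum>i\<le>m. ca i * cb (m-i) * cos (real_of_int (int m - 2 * int i + s) * \<theta>))) sums
     (Re (cis (real_of_int s * \<theta>) * (1 - cnj (of_real y * cis \<theta>))) / (1 + y^2 - 2*y*cos \<theta>) powr (3/2))"
proof -
  define z where "z = of_real y * cis \<theta>"
  have nz: "norm z = y" using y by (simp add: z_def norm_mult)
  have nz': "norm (cnj z) = y" using nz by simp
  have s1: "summable (\<lambda>i. norm (of_real (ca i) * cnj z ^ i))"
    using summable_ca[OF y] by (simp add: norm_mult norm_power nz abs_of_nonneg ca_nonneg)
  have s2: "summable (\<lambda>i. norm (of_real (cb i) * z ^ i))"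
    using summable_cb[OF y] by (simp add: norm_mult norm_power nz abs_of_nonneg cb_nonneg)
  have cp: "(\<lambda>m. \<Sum>i\<le>m. (of_real (ca i) * cnj z ^ i) * (of_real (cb (m-i)) * z ^ (m-i))) sums
        ((\<Sum>i. of_real (ca i) * cnj z ^ i) * (\<Sum>i. of_real (cb i) * z ^ i))"
    by (rule Cauchy_product_sums[OF s1 s2])
  have "(\<Sum>i. of_real (ca i) * cnj z ^ i) = (1 - cnj z) powr (-1/2)"
    using A_sums[of "cnj z"] nz' y by (simp add: sums_iff)
  moreover have "(\<Sum>i. of_real (cb i) * z ^ i) = (1 - z) powr (-1/2) / (1 - z)"
    using C_sums[of z] nz y by (simp add: sums_iff)
  ultimately have "((\<Sum>i. of_real (ca i) * cnj z ^ i) * (\<Sum>i. of_real (cb i) * z ^ i))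
       = (1 - cnj z) / of_real (norm (1 - z) ^ 3)"
    using key_identity[of z] nz y by simp
  also have "norm (1 - z) ^ 3 = (1 + y^2 - 2*y*cos \<theta>) powr (3/2)"
    unfolding z_def by (rule rho_powr[OF y])
  finally have cp2: "(\<lambda>m. \<Sum>i\<le>m. (of_real (ca i) * cnj z ^ i) * (of_real (cb (m-i)) * z ^ (m-i))) sums
        ((1 - cnj z) / of_real ((1 + y^2 - 2*y*cos \<theta>) powr (3/2)))"
    using cp by simp
  have "(\<lambda>m. Re (cis (real_of_int s * \<theta>) *
           (\<Sum>i\<le>m. (of_real (ca i) * cnj z ^ i) * (of_real (cb (m-i)) * z ^ (m-i))))) sums
        Re (cis (real_of_int s * \<theta>) * ((1 - cnj z) / of_real ((1 + y^2 - 2*y*cos \<theta>) powr (3/2))))"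
    by (intro sums_Re sums_mult cp2)
  moreover have "Re (cis (real_of_int s * \<theta>) * ((1 - cnj z) / of_real ((1 + y^2 - 2*y*cos \<theta>) powr (3/2))))
      = Re (cis (real_of_int s * \<theta>) * (1 - cnj z)) / (1 + y^2 - 2*y*cos \<theta>) powr (3/2)"
    by (simp only: times_divide_eq_right Re_divide_of_real)
  moreover have "Re (cis (real_of_int s * \<theta>) *
           (\<Sum>i\<le>m. (of_real (ca i) * cnj z ^ i) * (of_real (cb (m-i)) * z ^ (m-i))))
      = y^m * (\<Sum>i\<le>m. ca i * cb (m-i) * cos (real_of_int (int m - 2 * int i + s) * \<theta>))" for m
    unfolding sum_distrib_left Re_sum z_def by (intro sum.cong refl term_eq) simp
  ultimately show ?thesis unfolding z_def by simp
qed



lemma sq_powr: "0 < (r::real) \<Longrightarrow> (r^2) powr (3/2) = r^3"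
proof -
  assume "r > 0"
  have "r^2 = r powr (real 2)" using \<open>r > 0\<close> by (rule powr_realpow[symmetric])
  also have "(r powr (real 2)) powr (3/2) = r powr (real 3)" by (simp add: powr_powr)
  also have "r powr (real 3) = r ^ 3" using \<open>r > 0\<close> by (rule powr_realpow)
  finally show ?thesis .
qed

lemma geo_ring:
  fixes w :: complex
  shows "(w - 1) * (\<Sum>l=1..n. w^l) = w^(Suc n) - w"
proof (induction n)
  case 0 then show ?case by simp
next
  case (Suc n)
  have "(\<Sum>l=1..Suc n. w^l) = (\<Sum>l=1..n. w^l) + w^(Suc n)" by simp
  then have "(w - 1) * (\<Sum>l=1..Suc n. w^l) = (w - 1) * (\<Sum>l=1..n. w^l) + (w - 1) * w^(Suc n)"
    by (simp add: algebra_simps)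
  also have "\<dots> = w^(Suc (Suc n)) - w" using Suc.IH by (simp add: algebra_simps)
  finally show ?case .
qed

lemma ring_cos_sum:
  fixes q :: int and n :: nat
  assumes n: "n \<ge> 1"
  shows "0 \<le> (\<Sum>l=1..n. cos (real_of_int q * (2*pi*real l/real n)))"
proof -
  define w where "w = cis (2*pi*real_of_int q/real n)"
  have wl: "w^l = cis (real_of_int q * (2*pi*real l/real n))" for l
    unfolding w_def Complex.DeMoivre by (simp add: algebra_simps)
  have eq: "(\<Sum>l=1..n. cos (real_of_int q * (2*pi*real l/real n))) = Re (\<Sum>l=1..n. w^l)"
    by (simp add: wl)
  show ?thesis
  proof (cases "w = 1")
    case True
    then show ?thesis unfolding eq by simp
  next
    case False
    have "w^n = cis (2 * pi * real_of_int q)" unfolding w_def Complex.DeMoivre using n by simp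
    also have "\<dots> = 1" by (rule cis_multiple_2pi) simp
    finally have "w^n = 1" .
    then have "(w - 1) * (\<Sum>l=1..n. w^l) = 0" using geo_ring[of w n] by simp
    then have "(\<Sum>l=1..n. w^l) = 0" using False by simp
    then show ?thesis unfolding eq by simp
  qed
qed

lemma ring_cos_sum0:
  assumes "n \<ge> 1"
  shows "(\<Sum>l=1..n. cos (real_of_int 0 * (2*pi*real l/real n))) = real n"
  by simp

lemma ps_strict:
  fixes u :: "nat \<Rightarrow> real"
  assumes u: "\<And>m. 0 \<le> u m" and M: "0 < u M" "1 \<le> M"
    and P: "\<And>t. 0 \<le> t \<Longrightarrow> t < 1 \<Longrightarrow> (\<lambda>m. u m * t^m) sums P t"
    and xy: "0 \<le> x" "x < y" "y < 1"
  shows "P x < P y"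
proof -
  have d: "(\<lambda>m. u m * y^m - u m * x^m) sums (P y - P x)"
    using P[of y] P[of x] xy by (intro sums_diff) auto
  have nn: "0 \<le> u m * y^m - u m * x^m" for m
    using u[of m] xy by (simp add: mult_left_mono power_mono flip: right_diff_distrib)
  have "x^M < y^M" using xy M by (intro power_strict_mono) auto
  then have "0 < u M * y^M - u M * x^M" using M by (simp flip: right_diff_distrib)
  then have "0 < suminf (\<lambda>m. u m * y^m - u m * x^m)"
    using suminf_pos_iff[OF sums_summable[OF d] nn] by blast
  then show ?thesis using sums_unique[OF d] by simp
qed

lemma ps_nonneg:
  fixes u :: "nat \<Rightarrow> real"
  assumes u: "\<And>m. 0 \<le> u m" and s: "(\<lambda>m. u m * t^m) sums p" and t: "0 \<le> t"
  shows "0 \<le> p"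
  using sums_le[of "\<lambda>_. 0" "\<lambda>m. u m * t^m" 0 p] s u t by simp

definition Uc :: "nat \<Rightarrow> int \<Rightarrow> nat \<Rightarrow> real" where
  "Uc n s m = (\<Sum>l=1..n. \<Sum>i\<le>m. ca i * cb (m-i) *
       cos (real_of_int (int m - 2 * int i + s) * (2*pi*real l/real n)))"

lemma Uc_sums:
  assumes "0 \<le> t" "t < 1"
  shows "(\<lambda>m. Uc n s m * t^m) sums
     (\<Sum>l=1..n. Re (cis (real_of_int s * (2*pi*real l/real n)) * (1 - cnj (of_real t * cis (2*pi*real l/real n))))
          / (1 + t^2 - 2*t*cos (2*pi*real l/real n)) powr (3/2))"
proof -
  have "(\<lambda>m. \<Sum>l=1..n. t^m * (\<Sum>i\<le>m. ca i * cb (m-i) *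
       cos (real_of_int (int m - 2 * int i + s) * (2*pi*real l/real n)))) sums
     (\<Sum>l=1..n. Re (cis (real_of_int s * (2*pi*real l/real n)) * (1 - cnj (of_real t * cis (2*pi*real l/real n))))
          / (1 + t^2 - 2*t*cos (2*pi*real l/real n)) powr (3/2))"
    by (intro sums_sum expand assms)
  then show ?thesis by (simp add: Uc_def sum_distrib_left mult.commute)
qed

lemma Uc_alt: "Uc n s m = (\<Sum>i\<le>m. ca i * cb (m-i) *
   (\<Sum>l=1..n. cos (real_of_int (int m - 2 * int i + s) * (2*pi*real l/real n))))"
  unfolding Uc_def by (subst sum.swap) (simp add: sum_distrib_left)

lemma Uc_nonneg: "n \<ge> 1 \<Longrightarrow> 0 \<le> Uc n s m"
  unfolding Uc_alt
  by (intro sum_nonneg mult_nonneg_nonneg ca_nonneg cb_nonneg ring_cos_sum)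

lemma Uc_ge:
  assumes n: "n \<ge> 1" and im: "i \<le> m" and q: "int m - 2 * int i + s = 0"
  shows "ca i * cb (m - i) * real n \<le> Uc n s m"
proof -
  define f where "f = (\<lambda>i. ca i * cb (m-i) *
   (\<Sum>l=1..n. cos (real_of_int (int m - 2 * int i + s) * (2*pi*real l/real n))))"
  have "0 \<le> f j" for j unfolding f_def
    by (intro mult_nonneg_nonneg ca_nonneg cb_nonneg ring_cos_sum n)
  then have "f i \<le> sum f {..m}" by (intro member_le_sum) (use im in auto)
  then show ?thesis using q unfolding Uc_alt f_def by simp
qed

lemma cb1': "cb (Suc 0) = 3/2" using cb1 by simp

lemma Uc0_pos: assumes "n \<ge> 1" shows "0 < Uc n 0 2"
proof -
  have "0 < ca 1 * cb 1 * real n" using assms by (simp add: ca1' cb1')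
  moreover have "ca 1 * cb (2 - 1) * real n \<le> Uc n 0 2" by (rule Uc_ge) (use assms in auto)
  ultimately show ?thesis by simp
qed

lemma Uc1_pos: assumes "n \<ge> 1" shows "0 < Uc n 1 1"
proof -
  have "0 < ca 1 * cb 0 * real n" using assms by (simp add: ca1' cb0)
  moreover have "ca 1 * cb (1 - 1) * real n \<le> Uc n 1 1" by (rule Uc_ge) (use assms in auto)
  ultimately show ?thesis by simp
qed


lemma H0_sums_left:
  assumes "0 \<le> x" "x < 1"
  shows "(\<lambda>m. Uc n 0 m * x^m) sums H0 n x"
  using Uc_sums[OF assms, of n 0] by (simp add: H0_def)

definition Gf :: "nat \<Rightarrow> real \<Rightarrow> real" where
  "Gf n t = (\<Sum>l=1..n. (cos (2*pi*real l/real n) - t) /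
        (1 + t^2 - 2*t*cos (2*pi*real l/real n)) powr (3/2))"

lemma re1: "Re (cis \<theta> * (1 - cnj (of_real t * cis \<theta>))) = cos \<theta> - t"
proof -
  have "cis \<theta> * (1 - cnj (of_real t * cis \<theta>)) = cis \<theta> - of_real t * (cis \<theta> * cis (-\<theta>))"
    by (simp add: cis_cnj algebra_simps)
  also have "\<dots> = cis \<theta> - of_real t" by (simp add: cis_mult)
  finally show ?thesis by simp
qed

lemma G_sums:
  assumes "0 \<le> t" "t < 1"
  shows "(\<lambda>m. Uc n 1 m * t^m) sums Gf n t"
  unfolding Gf_def using Uc_sums[OF assms, of n 1] by (simp only: of_int_1 mult_1_left re1)

lemma F_inv:
  fixes x c :: real
  assumes x: "x > 1" and c: "c \<le> 1"
  shows "(1 - x*c)/(1 + x^2 - 2*x*c) powr (3/2)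
       = - ((1/x)^2 * ((c - 1/x)/(1 + (1/x)^2 - 2*(1/x)*c) powr (3/2)))"
proof -
  define t where "t = 1/x"
  have t: "0 < t" "t < 1" using x by (auto simp: t_def)
  define R where "R = 1 + t^2 - 2*t*c"
  have "R = (1 - t)^2 + 2*t*(1-c)" by (simp add: R_def power2_eq_square algebra_simps)
  moreover have "(1 - t)^2 > 0" using t by simp
  moreover have "2*t*(1-c) \<ge> 0" using t c by simp
  ultimately have R: "R > 0" by linarith
  have xt: "x * t = 1" using x by (simp add: t_def)
  have "1 + x^2 - 2*x*c = x^2 * R"
    using xt by (simp add: R_def power2_eq_square algebra_simps)
  then have "(1 + x^2 - 2*x*c) powr (3/2) = (x^2) powr (3/2) * R powr (3/2)"
    using R x by (simp add: powr_mult)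
  also have "(x^2) powr (3/2) = x^3" using x by (simp add: sq_powr)
  finally have d: "(1 + x^2 - 2*x*c) powr (3/2) = x^3 * R powr (3/2)" .
  have Rp: "R powr (3/2) > 0" using R by simp
  have "(1 - x*c)/(1 + x^2 - 2*x*c) powr (3/2) = (1 - x*c) / (x^3 * R powr (3/2))" by (simp only: d)
  also have "\<dots> = - (t^2 * ((c - t) / R powr (3/2)))"
    using x xt Rp by (simp add: t_def field_simps power2_eq_square power3_eq_cube)
  finally show ?thesis by (simp add: t_def R_def)
qed

lemma H0_right:
  assumes x: "x > 1"
  shows "H0 n x = - ((1/x)^2 * Gf n (1/x))"
  unfolding H0_def Gf_def sum_distrib_left sum_negf[symmetric]
  by (intro sum.cong refl F_inv x) simp

lemma F_bound:
  fixes x c :: real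
  assumes x: "x > 1" and c: "\<bar>c\<bar> \<le> 1"
  shows "\<bar>(1 - x*c)/(1 + x^2 - 2*x*c) powr (3/2)\<bar> \<le> (1+x)/(x-1)^3"
proof -
  have r: "(x-1)^2 \<le> 1 + x^2 - 2*x*c"
  proof -
    have "1 + x^2 - 2*x*c - (x-1)^2 = 2*x*(1-c)" by (simp add: power2_eq_square algebra_simps)
    moreover have "2*x*(1-c) \<ge> 0" using x c by simp
    ultimately show ?thesis by linarith
  qed
  have p: "(x-1)^3 \<le> (1 + x^2 - 2*x*c) powr (3/2)"
  proof -
    have "((x-1)^2) powr (3/2) \<le> (1 + x^2 - 2*x*c) powr (3/2)"
      using r by (intro powr_mono2) auto
    moreover have "((x-1)^2) powr (3/2) = (x-1)^3" using x by (intro sq_powr) simp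
    ultimately show ?thesis by simp
  qed
  have pos: "0 < (x-1)^3" using x by simp
  have num: "\<bar>1 - x*c\<bar> \<le> 1 + x"
  proof -
    have "\<bar>x*c\<bar> \<le> x" using x c by (simp add: abs_mult mult_left_le)
    then show ?thesis by linarith
  qed
  have "\<bar>(1 - x*c)/(1 + x^2 - 2*x*c) powr (3/2)\<bar> = \<bar>1 - x*c\<bar> / (1 + x^2 - 2*x*c) powr (3/2)"
    by simp
  also have "\<dots> \<le> (1+x)/(x-1)^3"
    by (rule frac_le) (use num pos p x in auto)
  finally show ?thesis .
qed

lemma cos_lt1:
  assumes n: "n \<ge> 1" and l: "1 \<le> l" "l < n"
  shows "cos (2*pi*real l/real n) < 1"
proof -
  have "cos (2*pi*real l/real n) \<noteq> 1"
  proof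
    assume "cos (2*pi*real l/real n) = 1"
    then obtain j :: int where j: "2*pi*real l/real n = real_of_int j * 2 * pi"
      by (auto simp: cos_one_2pi_int)
    have "real l / real n = (2*pi*real l/real n)/(2*pi)" by simp
    also have "\<dots> = (real_of_int j*2*pi)/(2*pi)" by (simp only: j)
    also have "\<dots> = real_of_int j" by simp
    finally have "real l / real n = real_of_int j" .
    moreover have "0 < real l / real n" "real l / real n < 1" using n l by auto
    ultimately have "0 < real_of_int j" "real_of_int j < 1" by simp_all
    then have "0 < j" "j < 1" by simp_all
    then show False by simp
  qed
  then show ?thesis using cos_le_one[of "2*pi*real l/real n"] by linarith
qed

theorem lemma1:
  fixes n :: nat
  assumes "n \<ge> 1"
  shows "strict_mono_on {0..<1} (k n)
       \<and> strict_mono_on {1<..} (k n)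
       \<and> k n 0 = 0
       \<and> filterlim (k n) at_top (at_left 1)
       \<and> filterlim (k n) at_bot (at_right 1)
       \<and> ((k n) \<longlongrightarrow> -1) at_top"
proof -
  have n: "n \<ge> 1" by fact
  have npos: "real n > 0" using n by simp
  define F where "F = (\<lambda>x c::real. (1 - x*c)/(1 + x^2 - 2*x*c) powr (3/2))"
  have H0F: "H0 n x = (\<Sum>l=1..n. F x (cos (2*pi*real l/real n)))" for x
    by (simp add: H0_def F_def)
  have kH: "k n x = H0 n x / real n - 1" for x by (simp add: k_def)
  have m1: "strict_mono_on {0..<1} (k n)"
  proof (rule strict_mono_onI)
    fix x y :: real assume "x \<in> {0..<1}" "y \<in> {0..<1}" "x < y"
    then have "H0 n x < H0 n y"
      by (intro ps_strict[of "Uc n 0" 2 "H0 n"] Uc_nonneg Uc0_pos H0_sums_left n) auto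
    then show "k n x < k n y" unfolding kH using npos by (simp add: divide_strict_right_mono)
  qed
  have m2: "strict_mono_on {1<..} (k n)"
  proof (rule strict_mono_onI)
    fix x y :: real assume "x \<in> {1<..}" "y \<in> {1<..}" "x < y"
    then have x: "x > 1" and y: "y > 1" and xy: "x < y" by auto
    define s t where "s = 1/x" and "t = 1/y"
    have st: "0 < t" "t < s" "s < 1" using x y xy by (auto simp: s_def t_def frac_less2)
    have G: "Gf n t < Gf n s"
      by (intro ps_strict[of "Uc n 1" 1 "Gf n"] Uc_nonneg Uc1_pos G_sums n) (use st in auto)
    have G0: "0 \<le> Gf n t"
      by (rule ps_nonneg[of "Uc n 1" t]) (use st in \<open>auto intro: Uc_nonneg n G_sums\<close>)
    have "t^2 * Gf n t \<le> s^2 * Gf n t"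
      using st G0 by (intro mult_right_mono power_mono) auto
    also have "\<dots> < s^2 * Gf n s" using st G by simp
    finally have "H0 n x < H0 n y"
      using H0_right[OF x, of n] H0_right[OF y, of n] by (simp add: s_def t_def)
    then show "k n x < k n y" unfolding kH using npos by (simp add: divide_strict_right_mono)
  qed
  have k0: "k n 0 = 0" using npos by (simp add: k_def H0_def)
  define Q where "Q = (\<lambda>x. \<Sum>l\<in>{1..<n}. F x (cos (2*pi*real l/real n)))"
  have split: "H0 n x = F x 1 + Q x" for x
  proof -
    have "{1..n} = insert n {1..<n}" using n by auto
    then have "H0 n x = F x (cos (2*pi*real n/real n)) + Q x"
      unfolding H0F Q_def by simp
    also have "cos (2*pi*real n/real n) = 1" using npos by simp
    finally show ?thesis .
  qed
  have F1: "F x 1 = (1 - x) / \<bar>1 - x\<bar>^3" if "x \<noteq> 1" for x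
  proof -
    have "1 + x^2 - 2*x*1 = \<bar>1 - x\<bar>^2" by (simp add: power2_eq_square algebra_simps)
    moreover have "(\<bar>1 - x\<bar>^2) powr (3/2) = \<bar>1 - x\<bar>^3" using that by (intro sq_powr) simp
    ultimately show ?thesis by (simp add: F_def)
  qed
  have Qc: "isCont Q 1"
    unfolding Q_def
  proof (intro isCont_sum ballI)
    fix l assume "l \<in> {1..<n}"
    then have cl: "cos (2*pi*real l/real n) < 1" using cos_lt1[OF n] by auto
    show "isCont (\<lambda>x. F x (cos (2*pi*real l/real n))) 1"
      unfolding F_def using cl by (intro continuous_intros) auto
  qed
  have QL: "(Q \<longlongrightarrow> Q 1) (at_left 1)"
    using Qc by (simp add: isCont_def filterlim_at_split)
  have QR: "(Q \<longlongrightarrow> Q 1) (at_right 1)"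
    using Qc by (simp add: isCont_def filterlim_at_split)
  have lim1: "filterlim (k n) at_top (at_left 1)"
  proof -
    have R: "filterlim (\<lambda>x::real. 1/(1-x)^2) at_top (at_left 1)" by real_asymp
    have A: "filterlim (\<lambda>x. Q x + 1/(1-x)^2) at_top (at_left 1)"
      by (rule filterlim_tendsto_add_at_top[OF QL R])
    have "filterlim (\<lambda>x. (1/real n) * (Q x + 1/(1-x)^2)) at_top (at_left 1)"
      by (rule filterlim_tendsto_pos_mult_at_top[OF tendsto_const _ A]) (use npos in simp)
    then have "filterlim (\<lambda>x. (-1) + (1/real n) * (Q x + 1/(1-x)^2)) at_top (at_left 1)"
      by (rule filterlim_tendsto_add_at_top[OF tendsto_const])
    moreover have ev: "eventually (\<lambda>x. (-1) + (1/real n) * (Q x + 1/(1-x)^2) = k n x) (at_left 1)"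
    proof -
      have "(-1) + (1/real n) * (Q x + 1/(1-x)^2) = k n x" if "x < 1" for x
      proof -
        have "F x 1 = 1/(1-x)^2" using F1[of x] that
          by (simp add: power2_eq_square power3_eq_cube)
        then show ?thesis unfolding kH split by simp
      qed
      then show ?thesis by (auto simp: eventually_at_filter)
    qed
    ultimately show ?thesis using filterlim_cong[OF refl refl ev] by simp
  qed
  have lim2: "filterlim (k n) at_bot (at_right 1)"
  proof -
    have R: "filterlim (\<lambda>x::real. 1/(x-1)^2) at_top (at_right 1)" by real_asymp
    have QR': "((\<lambda>x. - Q x) \<longlongrightarrow> - Q 1) (at_right 1)" by (intro tendsto_intros QR)
    have A: "filterlim (\<lambda>x. - Q x + 1/(x-1)^2) at_top (at_right 1)"
      by (rule filterlim_tendsto_add_at_top[OF QR' R])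
    have "filterlim (\<lambda>x. (1/real n) * (- Q x + 1/(x-1)^2)) at_top (at_right 1)"
      by (rule filterlim_tendsto_pos_mult_at_top[OF tendsto_const _ A]) (use npos in simp)
    then have "filterlim (\<lambda>x. 1 + (1/real n) * (- Q x + 1/(x-1)^2)) at_top (at_right 1)"
      by (rule filterlim_tendsto_add_at_top[OF tendsto_const])
    moreover have ev: "eventually (\<lambda>x. 1 + (1/real n) * (- Q x + 1/(x-1)^2) = - k n x) (at_right 1)"
    proof -
      have "1 + (1/real n) * (- Q x + 1/(x-1)^2) = - k n x" if "x > 1" for x
      proof -
        define u where "u = x - 1"
        have u: "u > 0" using that by (simp add: u_def)
        have "\<bar>1 - x\<bar> = u" "1 - x = - u" using that by (simp_all add: u_def)
        then have "F x 1 = (- u) / u^3" using F1[of x] that by simp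
        also have "\<dots> = - (1/u^2)" using u by (simp add: power2_eq_square power3_eq_cube)
        finally have "F x 1 = - (1/(x-1)^2)" by (simp add: u_def)
        then show ?thesis unfolding kH split using npos by (simp add: field_simps)
      qed
      then show ?thesis by (auto simp: eventually_at_filter)
    qed
    ultimately have "filterlim (\<lambda>x. - k n x) at_top (at_right 1)"
      using filterlim_cong[OF refl refl ev] by simp
    then show ?thesis by (simp add: filterlim_uminus_at_bot)
  qed
  have lim3: "((k n) \<longlongrightarrow> -1) at_top"
  proof -
    have B: "((\<lambda>x::real. (1+x)/(x-1)^3) \<longlongrightarrow> 0) at_top" by real_asymp
    have T: "((\<lambda>x. F x (cos (2*pi*real l/real n))) \<longlongrightarrow> 0) at_top" for l
    proof (rule Lim_null_comparison[OF _ B])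
      have "eventually (\<lambda>x::real. x > 1) at_top" by (rule eventually_gt_at_top)
      then show "eventually (\<lambda>x. norm (F x (cos (2*pi*real l/real n))) \<le> (1+x)/(x-1)^3) at_top"
        by eventually_elim (use F_bound in \<open>auto simp: F_def\<close>)
    qed
    have "(H0 n \<longlongrightarrow> 0) at_top"
      unfolding H0F by (rule tendsto_null_sum) (rule T)
    then have "((\<lambda>x. (1/real n) * H0 n x - 1) \<longlongrightarrow> (1/real n) * 0 - 1) at_top"
      by (intro tendsto_intros)
    then show ?thesis unfolding kH by simp
  qed
  show ?thesis using m1 m2 k0 lim1 lim2 lim3 by blast
qed

end
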